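(* Let $\pi\triangleright\Gamma\vdash^{(m,e)} t:\mathtt{n}$ be a derivation in the silly multi type system. (1) If $t\to_{ym} u$ then $m\geq1$ and there is a derivation $\rho\triangleright\Gamma\vdash^{(m-1,e)}u:\mathtt{n}$. (2) If $t\to_{yeAY}u$ or $t\to_{yeYN}u$ then $e\geq 1$ and there is a derivation $\rho\triangleright\Gamma\vdash^{(m,e-1)}u:\mathtt{n}$.
   Context: Terms: $t ::= x \mid \lambda x.t \mid t\,u \mid t[x\backslash u]$ ($t[x\backslash u]$ an explicit substitution binding $x$ in $t$; terms up to $\alpha$). Values $v ::= \lambda x.t$. Substitution contexts $S ::= \langle\cdot\rangle\mid S[x\backslash u]$. For a class of contexts $K$, $K\langle\langle t\rangle\rangle$ is plugging without capture of free variables of $t$. Root rules: $S\langle\lambda x.t\rangle u\mapsto_m S\langle t[x\backslash u]\rangle$; $K\langle\langle x\rangle\rangle[x\backslash u]\mapsto_{e_K} K\langle\langle u\rangle\rangle[x\backslash u]$. Answers $a ::= v\mid a[x\backslash a']$; name contexts $N ::= \langle\cdot\rangle\mid N t\mid N[x\backslash t]$; auxiliary contexts $A ::= \langle\cdot\rangle\mid a[x\backslash A]\mid A[x\backslash t]$; silly contexts $Y ::= A\langle N\rangle$. $\to_{ym} := Y\langle\mapsto_m\rangle$; $\to_{yeAY} := A\langle\mapsto_{e_Y}\rangle$; $\to_{yeYN} := Y\langle\mapsto_{e_N}\rangle$. Silly multi types: linear types $L ::= \mathtt{n} \mid M\multimap L$; multi types $M ::= [L_i]_{i\in I}$ finite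 multisets ($\mathbf{0}$ empty, $\uplus$ sum). Type contexts $\Gamma$ map variables to multi types with finite support; $\uplus$ pointwise; $\Gamma\setminus\!\!\setminus x$ sets $x$ to $\mathbf{0}$. Rules: (ax) $x:[L]\vdash^{(0,1)} x:L$; (many) from $(\Gamma_i\vdash^{(m_i,e_i)} t : L_i)_{i\in I}$, $I$ finite possibly empty, infer $\uplus_i\Gamma_i\vdash^{(\sum m_i,\sum e_i)} t : [L_i]_{i\in I}$; ($\mathrm{ax}_\lambda$) $\vdash^{(0,0)}\lambda x.t:\mathtt{n}$; ($\lambda$) from $\Gamma\vdash^{(m,e)}t:L$ infer $\Gamma\setminus\!\!\setminus x\vdash^{(m,e)}\lambda x.t:\Gamma(x)\multimap L$; (@) from $\Gamma\vdash^{(m,e)} t : M\multimap L$ and $\Delta\vdash^{(m',e')} u : M\uplus[\mathtt{n}]$ infer $\Gamma\uplus\Delta\vdash^{(m+m'+1,e+e')} tu : L$; (ES) from $\Gamma\vdash^{(m,e)} t:L$ and $\Delta\vdash^{(m',e')}u:\Gamma(x)\uplus[\mathtt{n}]$ infer $(\Gamma\setminus\!\!\setminus x)\uplus\Delta\vdash^{(m+m',e+e')} t[x\backslash u]:L$. *)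

theory Defs
  imports Main "HOL-Library.Multiset"
begin

text \<open>ES t u represents t[x\u]: index 0 of t is bound by the explicit substitution;
  u lives in the outer scope.\<close>
datatype trm = Var nat | Lam trm | App trm trm | ES trm trm

fun lift :: "nat \<Rightarrow> nat \<Rightarrow> trm \<Rightarrow> trm" where
  "lift k c (Var i) = Var (if i < c then i else i + k)"
| "lift k c (Lam t) = Lam (lift k (Suc c) t)"
| "lift k c (App t u) = App (lift k c t) (lift k c u)"
| "lift k c (ES t u) = ES (lift k (Suc c) t) (lift k c u)"

inductive answer :: "trm \<Rightarrow> bool" where
  "answer (Lam t)"
| "answer a \<Longrightarrow> answer a' \<Longrightarrow> answer (ES a a')"

datatype ctx = Hole | CAppL ctx trm | CAppR trm ctx | CLam ctx | CESL ctx trm | CESR trm ctx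

fun plug :: "ctx \<Rightarrow> trm \<Rightarrow> trm" where
  "plug Hole t = t"
| "plug (CAppL C u) t = App (plug C t) u"
| "plug (CAppR u C) t = App u (plug C t)"
| "plug (CLam C) t = Lam (plug C t)"
| "plug (CESL C u) t = ES (plug C t) u"
| "plug (CESR u C) t = ES u (plug C t)"

fun depth :: "ctx \<Rightarrow> nat" where
  "depth Hole = 0"
| "depth (CAppL C u) = depth C"
| "depth (CAppR u C) = depth C"
| "depth (CLam C) = Suc (depth C)"
| "depth (CESL C u) = Suc (depth C)"
| "depth (CESR u C) = depth C"

fun comp :: "ctx \<Rightarrow> ctx \<Rightarrow> ctx" where
  "comp Hole D = D"
| "comp (CAppL C u) D = CAppL (comp C D) u"
| "comp (CAppR u C) D = CAppR u (comp C D)"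
| "comp (CLam C) D = CLam (comp C D)"
| "comp (CESL C u) D = CESL (comp C D) u"
| "comp (CESR u C) D = CESR u (comp C D)"

inductive is_S :: "ctx \<Rightarrow> bool" where
  "is_S Hole"
| "is_S S \<Longrightarrow> is_S (CESL S t)"

inductive is_N :: "ctx \<Rightarrow> bool" where
  "is_N Hole"
| "is_N C \<Longrightarrow> is_N (CAppL C t)"
| "is_N C \<Longrightarrow> is_N (CESL C t)"

inductive is_A :: "ctx \<Rightarrow> bool" where
  "is_A Hole"
| "answer a \<Longrightarrow> is_A C \<Longrightarrow> is_A (CESR a C)"
| "is_A C \<Longrightarrow> is_A (CESL C t)"

definition is_Y :: "ctx \<Rightarrow> bool" where
  "is_Y C \<longleftrightarrow> (\<exists>A N. is_A A \<and> is_N N \<and> C = comp A N)"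

text \<open>S<\<lambda>x.s> r \<mapsto>m S<s[x\r]> ; r is shifted because it moves under the binders of S\<close>
definition root_m :: "trm \<Rightarrow> trm \<Rightarrow> bool" where
  "root_m t u \<longleftrightarrow> (\<exists>S s r. is_S S \<and> t = App (plug S (Lam s)) r
                        \<and> u = plug S (ES s (lift (depth S) 0 r)))"

text \<open>K<<x>>[x\s] \<mapsto>e_K K<<s>>[x\s] : at the hole of K, the variable bound by the outer
  ES has index depth K; the copy of s is shifted by depth K + 1.\<close>
definition root_e :: "(ctx \<Rightarrow> bool) \<Rightarrow> trm \<Rightarrow> trm \<Rightarrow> bool" where
  "root_e P t u \<longleftrightarrow> (\<exists>K s. P K \<and> t = ES (plug K (Var (depth K))) s
                        \<and> u = ES (plug K (lift (Suc (depth K)) 0 s)) s)"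

definition ym :: "trm \<Rightarrow> trm \<Rightarrow> bool" where
  "ym t u \<longleftrightarrow> (\<exists>Y l r. is_Y Y \<and> root_m l r \<and> t = plug Y l \<and> u = plug Y r)"

definition yeAY :: "trm \<Rightarrow> trm \<Rightarrow> bool" where
  "yeAY t u \<longleftrightarrow> (\<exists>A l r. is_A A \<and> root_e is_Y l r \<and> t = plug A l \<and> u = plug A r)"

definition yeYN :: "trm \<Rightarrow> trm \<Rightarrow> bool" where
  "yeYN t u \<longleftrightarrow> (\<exists>Y l r. is_Y Y \<and> root_e is_N l r \<and> t = plug Y l \<and> u = plug Y r)"

datatype ltype = TN | Arrow "ltype multiset" ltype

type_synonym tctx = "nat \<Rightarrow> ltype multiset"

definition empty_ctx :: tctx where "empty_ctx = (\<lambda>_. {#})"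

definition ctx_sum :: "tctx \<Rightarrow> tctx \<Rightarrow> tctx" where
  "ctx_sum G D = (\<lambda>x. G x + D x)"

definition ctx_unbind :: "tctx \<Rightarrow> tctx" where
  "ctx_unbind G = (\<lambda>i. G (Suc i))"

inductive der :: "tctx \<Rightarrow> trm \<Rightarrow> ltype \<Rightarrow> nat \<Rightarrow> nat \<Rightarrow> bool"
  and mder :: "tctx \<Rightarrow> trm \<Rightarrow> ltype multiset \<Rightarrow> nat \<Rightarrow> nat \<Rightarrow> bool" where
  ax: "der (empty_ctx(x := {#L#})) (Var x) L 0 1"
| ax_lam: "der empty_ctx (Lam t) TN 0 0"
| lam: "der G t L m e \<Longrightarrow> der (ctx_unbind G) (Lam t) (Arrow (G 0) L) m e"
| app: "der G t (Arrow M L) m e \<Longrightarrow> mder D u (M + {#TN#}) m' e'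
        \<Longrightarrow> der (ctx_sum G D) (App t u) L (m + m' + 1) (e + e')"
| es: "der G t L m e \<Longrightarrow> mder D u (G 0 + {#TN#}) m' e'
        \<Longrightarrow> der (ctx_sum (ctx_unbind G) D) (ES t u) L (m + m') (e + e')"
| many_empty: "mder empty_ctx t {#} 0 0"
| many_add: "der G t L m e \<Longrightarrow> mder D t M m' e'
        \<Longrightarrow> mder (ctx_sum G D) t (add_mset L M) (m + m') (e + e')"

end

theory Submission
  imports Defs
begin

inductive_cases der_VarE: "der G (Var x) L m e"
inductive_cases der_LamE: "der G (Lam t) L m e"
inductive_cases der_AppE: "der G (App t u) L m e"
inductive_cases der_ESE: "der G (ES t u) L m e"
inductive_cases mder_emptyE: "mder G t {#} m e"

definition shc :: "nat \<Rightarrow> nat \<Rightarrow> tctx \<Rightarrow> tctx" where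
  "shc k c G = (\<lambda>i. if i < c then G i else if i < c + k then {#} else G (i - k))"

lemma shc_unbind: "ctx_unbind (shc k (Suc c) G) = shc k c (ctx_unbind G)"
  unfolding shc_def ctx_unbind_def
  by (rule ext) (auto simp: Suc_diff_le)

lemma shc_sum: "shc k c (ctx_sum G D) = ctx_sum (shc k c G) (shc k c D)"
  unfolding shc_def ctx_sum_def by auto

lemma shc_empty: "shc k c empty_ctx = empty_ctx"
  unfolding shc_def empty_ctx_def by auto

lemma shc_ax: "shc k c (empty_ctx(x := {#L#})) = empty_ctx((if x < c then x else x + k) := {#L#})"
  unfolding shc_def empty_ctx_def by (rule ext) auto

lemma lift_der:
  "der G t L m e \<Longrightarrow> (\<And>k c. der (shc k c G) (lift k c t) L m e)"
  "mder G t M m e \<Longrightarrow> (\<And>k c. mder (shc k c G) (lift k c t) M m e)"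
proof (induction rule: der_mder.inducts)
  case (ax x L)
  have "der (empty_ctx((if x<c then x else x+k) := {#L#})) (Var (if x<c then x else x+k)) L 0 1"
    by (rule der_mder.ax)
  then show ?case by (simp only: shc_ax lift.simps)
next
  case (ax_lam t)
  then show ?case by (simp add: shc_empty der_mder.ax_lam)
next
  case (lam G t L m e)
  have "der (ctx_unbind (shc k (Suc c) G)) (Lam (lift k (Suc c) t)) (Arrow (shc k (Suc c) G 0) L) m e"
    using lam.IH by (rule der_mder.lam)
  moreover have "shc k (Suc c) G 0 = G 0" by (simp add: shc_def)
  ultimately show ?case by (simp add: shc_unbind)
next
  case (app G t M L m e D u m' e')
  have "der (ctx_sum (shc k c G) (shc k c D)) (App (lift k c t) (lift k c u)) L (m + m' + 1) (e + e')"
    by (rule der_mder.app[OF app.IH(1) app.IH(2)])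
  then show ?case by (simp add: shc_sum)
next
  case (es G t L m e D u m' e')
  have "der (ctx_sum (ctx_unbind (shc k (Suc c) G)) (shc k c D)) (ES (lift k (Suc c) t) (lift k c u)) L (m + m') (e + e')"
    apply (rule der_mder.es[OF es.IH(1)])
    using es.IH(2)[of k c] by (simp add: shc_def)
  then show ?case by (simp add: shc_unbind shc_sum)
next
  case (many_empty t)
  then show ?case by (simp add: shc_empty der_mder.many_empty)
next
  case (many_add G t L m e D M m' e')
  then show ?case by (simp add: shc_sum der_mder.many_add)
qed

lemma lift0[simp]: "lift 0 c t = t"
  by (induction t arbitrary: c) auto

lemma lift_lift: "lift j c (lift k c t) = lift (j + k) c t"
  by (induction t arbitrary: c) auto

lemma ctx_sum_empty[simp]: "ctx_sum G empty_ctx = G" "ctx_sum empty_ctx G = G"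
  unfolding ctx_sum_def empty_ctx_def by auto

lemma mder_split_aux:
  "der G0 t0 L0 m0 e0 \<Longrightarrow> True"
  "mder D t M m e \<Longrightarrow> (\<forall>L. L \<in># M \<longrightarrow> (\<exists>D1 D2 m1 m2 e1 e2. D = ctx_sum D1 D2 \<and> m = m1 + m2 \<and> e = e1 + e2
     \<and> der D1 t L m1 e1 \<and> mder D2 t (M - {#L#}) m2 e2))"
proof (induction rule: der_mder.inducts)
  case (many_add G t L0 m e D M m' e')
  show ?case
  proof (intro allI impI)
    fix L assume L: "L \<in># add_mset L0 M"
    show "\<exists>D1 D2 m1 m2 e1 e2. ctx_sum G D = ctx_sum D1 D2 \<and> m + m' = m1 + m2 \<and> e + e' = e1 + e2
     \<and> der D1 t L m1 e1 \<and> mder D2 t (add_mset L0 M - {#L#}) m2 e2"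
    proof (cases "L = L0")
      case True
      then show ?thesis using many_add by fastforce
    next
      case False
      then have "L \<in># M" using L by auto
      then obtain D1 D2 m1 m2 e1 e2 where h: "D = ctx_sum D1 D2" "m' = m1 + m2" "e' = e1 + e2"
        "der D1 t L m1 e1" "mder D2 t (M - {#L#}) m2 e2" using many_add.IH(2) by blast
      have "mder (ctx_sum G D2) t (add_mset L0 (M - {#L#})) (m + m2) (e + e2)"
        using many_add.hyps(1) h(5) by (rule der_mder.many_add)
      moreover have "add_mset L0 (M - {#L#}) = add_mset L0 M - {#L#}" using False by auto
      moreover have "ctx_sum G D = ctx_sum D1 (ctx_sum G D2)" using h(1)
        unfolding ctx_sum_def by (auto simp: add_ac)
      ultimately show ?thesis using h
        by (rule_tac x=D1 in exI, rule_tac x="ctx_sum G D2" in exI, rule_tac x=m1 in exI, rule_tac x="m+m2" in exI,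
            rule_tac x=e1 in exI, rule_tac x="e+e2" in exI) auto
    qed
  qed
qed auto

lemma mder_split:
  "mder D t M m e \<Longrightarrow> L \<in># M \<Longrightarrow> \<exists>D1 D2 m1 m2 e1 e2. D = ctx_sum D1 D2 \<and> m = m1 + m2 \<and> e = e1 + e2
     \<and> der D1 t L m1 e1 \<and> mder D2 t (M - {#L#}) m2 e2"
  using mder_split_aux(2) by blast

lemma mder_single: "mder D t {#L#} m e \<Longrightarrow> der D t L m e"
  using mder_split[of D t "{#L#}" m e L] by (auto elim: mder_emptyE)

lemma mder_single_intro: "der D t L m e \<Longrightarrow> mder D t {#L#} m e"
  using der_mder.many_add[OF _ der_mder.many_empty, of D t L m e] by simp

lemma answer_ctx: "answer a \<Longrightarrow> der G a TN m e \<Longrightarrow> G = empty_ctx"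
proof (induction a arbitrary: G m e rule: answer.induct)
  case (1 t)
  then show ?case by (auto elim: der_LamE)
next
  case (2 a a')
  from 2(5) obtain Ga D ma ea m' e' where h: "G = ctx_sum (ctx_unbind Ga) D" "der Ga a TN ma ea"
    "mder D a' (Ga 0 + {#TN#}) m' e'" by (auto elim: der_ESE)
  have "Ga = empty_ctx" using 2(3) h(2) .
  then have "der D a' TN m' e'" using h(3) mder_single by (simp add: empty_ctx_def)
  then have "D = empty_ctx" using 2(4) by blast
  then show ?case using h `Ga = empty_ctx` by (simp add: ctx_unbind_def empty_ctx_def ctx_sum_def)
qed

definition decomp :: "ctx \<Rightarrow> tctx \<Rightarrow> ltype \<Rightarrow> nat \<Rightarrow> nat \<Rightarrow> tctx \<Rightarrow> ltype \<Rightarrow> nat \<Rightarrow> nat \<Rightarrow> bool" where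
  "decomp C G L m e G1 L1 m1 e1 \<longleftrightarrow> (\<exists>Gr mr er. G = (\<lambda>i. Gr i + G1 (i + depth C)) \<and> m = mr + m1 \<and> e = er + e1
     \<and> (\<forall>G1' t' m1' e1'. der G1' t' L1 m1' e1' \<longrightarrow> (\<forall>i<depth C. G1' i = G1 i)
           \<longrightarrow> der (\<lambda>i. Gr i + G1' (i + depth C)) (plug C t') L (mr + m1') (er + e1')))"

lemma decomp_Hole: "decomp Hole G L m e G L m e"
  unfolding decomp_def by (rule exI[of _ "\<lambda>_. {#}"]) auto

lemma decomp_AppL:
  assumes "decomp C G' (Arrow M L) m0 e0 G1 L1 m1 e1" "mder D u (M + {#TN#}) m' e'"
  shows "decomp (CAppL C u) (ctx_sum G' D) L (m0 + m' + 1) (e0 + e') G1 L1 m1 e1"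
proof -
  obtain Gr mr er where h: "G' = (\<lambda>i. Gr i + G1 (i + depth C))" "m0 = mr + m1" "e0 = er + e1"
    "\<And>G1' t' m1' e1'. der G1' t' L1 m1' e1' \<Longrightarrow> (\<forall>i<depth C. G1' i = G1 i)
           \<Longrightarrow> der (\<lambda>i. Gr i + G1' (i + depth C)) (plug C t') (Arrow M L) (mr + m1') (er + e1')"
    using assms(1) unfolding decomp_def by blast
  show ?thesis unfolding decomp_def
  proof (intro exI conjI allI impI)
    show "ctx_sum G' D = (\<lambda>i. (Gr i + D i) + G1 (i + depth (CAppL C u)))"
      using h(1) by (auto simp: ctx_sum_def add_ac)
    show "m0 + m' + 1 = (mr + m' + 1) + m1" using h by simp
    show "e0 + e' = (er + e') + e1" using h by simp
    fix G1' t' m1' e1' assume a: "der G1' t' L1 m1' e1'" "\<forall>i<depth (CAppL C u). G1' i = G1 i"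
    have "der (ctx_sum (\<lambda>i. Gr i + G1' (i + depth C)) D) (App (plug C t') u) L (mr + m1' + m' + 1) (er + e1' + e')"
      using h(4)[OF a(1)] a(2) by (intro der_mder.app[OF _ assms(2)]) auto
    moreover have "ctx_sum (\<lambda>i. Gr i + G1' (i + depth C)) D = (\<lambda>i. (Gr i + D i) + G1' (i + depth (CAppL C u)))"
      by (auto simp: ctx_sum_def add_ac)
    ultimately show "der (\<lambda>i. (Gr i + D i) + G1' (i + depth (CAppL C u))) (plug (CAppL C u) t') L
        ((mr + m' + 1) + m1') ((er + e') + e1')" by (simp add: add_ac)
  qed
qed

lemma decomp_ESL:
  assumes "decomp C G' L m0 e0 G1 L1 m1 e1" "mder D u (G' 0 + {#TN#}) m' e'"
  shows "decomp (CESL C u) (ctx_sum (ctx_unbind G') D) L (m0 + m') (e0 + e') G1 L1 m1 e1"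
proof -
  obtain Gr mr er where h: "G' = (\<lambda>i. Gr i + G1 (i + depth C))" "m0 = mr + m1" "e0 = er + e1"
    "\<And>G1' t' m1' e1'. der G1' t' L1 m1' e1' \<Longrightarrow> (\<forall>i<depth C. G1' i = G1 i)
           \<Longrightarrow> der (\<lambda>i. Gr i + G1' (i + depth C)) (plug C t') L (mr + m1') (er + e1')"
    using assms(1) unfolding decomp_def by blast
  show ?thesis unfolding decomp_def
  proof (intro exI conjI allI impI)
    show "ctx_sum (ctx_unbind G') D = (\<lambda>i. (Gr (Suc i) + D i) + G1 (i + depth (CESL C u)))"
      using h(1) by (auto simp: ctx_sum_def ctx_unbind_def add_ac)
    show "m0 + m' = (mr + m') + m1" using h by simp
    show "e0 + e' = (er + e') + e1" using h by simp
    fix G1' t' m1' e1' assume a: "der G1' t' L1 m1' e1'" "\<forall>i<depth (CESL C u). G1' i = G1 i"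
    let ?G = "\<lambda>i. Gr i + G1' (i + depth C)"
    have "?G 0 = G' 0" using h(1) a(2) by simp
    then have "der (ctx_sum (ctx_unbind ?G) D) (ES (plug C t') u) L (mr + m1' + m') (er + e1' + e')"
      using h(4)[OF a(1)] a(2) assms(2) by (auto intro: der_mder.es)
    moreover have "ctx_sum (ctx_unbind ?G) D = (\<lambda>i. (Gr (Suc i) + D i) + G1' (i + depth (CESL C u)))"
      by (auto simp: ctx_sum_def ctx_unbind_def add_ac)
    ultimately show "der (\<lambda>i. (Gr (Suc i) + D i) + G1' (i + depth (CESL C u))) (plug (CESL C u) t') L
        ((mr + m') + m1') ((er + e') + e1')" by (simp add: add_ac)
  qed
qed

lemma decomp_ESR:
  assumes "answer a" "der Ga a TN ma ea" "decomp C D TN m' e' G1 L1 m1 e1"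
  shows "decomp (CESR a C) (ctx_sum (ctx_unbind Ga) D) TN (ma + m') (ea + e') G1 L1 m1 e1"
proof -
  have Ga: "Ga = empty_ctx" using answer_ctx assms(1,2) by blast
  obtain Gr mr er where h: "D = (\<lambda>i. Gr i + G1 (i + depth C))" "m' = mr + m1" "e' = er + e1"
    "\<And>G1' t' m1' e1'. der G1' t' L1 m1' e1' \<Longrightarrow> (\<forall>i<depth C. G1' i = G1 i)
           \<Longrightarrow> der (\<lambda>i. Gr i + G1' (i + depth C)) (plug C t') TN (mr + m1') (er + e1')"
    using assms(3) unfolding decomp_def by blast
  have u: "ctx_unbind empty_ctx = empty_ctx" by (simp add: ctx_unbind_def empty_ctx_def)
  show ?thesis unfolding decomp_def
  proof (intro exI conjI allI impI)
    show "ctx_sum (ctx_unbind Ga) D = (\<lambda>i. Gr i + G1 (i + depth (CESR a C)))"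
      using h(1) Ga u by simp
    show "ma + m' = (ma + mr) + m1" using h by simp
    show "ea + e' = (ea + er) + e1" using h by simp
    fix G1' t' m1' e1' assume a: "der G1' t' L1 m1' e1'" "\<forall>i<depth (CESR a C). G1' i = G1 i"
    have "mder (\<lambda>i. Gr i + G1' (i + depth C)) (plug C t') (Ga 0 + {#TN#}) (mr + m1') (er + e1')"
      using h(4)[OF a(1)] a(2) Ga by (auto simp: empty_ctx_def intro: mder_single_intro)
    from der_mder.es[OF assms(2) this]
    show "der (\<lambda>i. Gr i + G1' (i + depth (CESR a C))) (plug (CESR a C) t') TN
        ((ma + mr) + m1') ((ea + er) + e1')" using Ga u by (simp add: add_ac)
  qed
qed

lemma N_lemma:
  "is_N C \<Longrightarrow> der G (plug C t) L m e \<Longrightarrow> \<exists>G1 L1 m1 e1. der G1 t L1 m1 e1 \<and> decomp C G L m e G1 L1 m1 e1"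
proof (induction C arbitrary: G L m e rule: is_N.induct)
  case 1
  then show ?case using decomp_Hole by fastforce
next
  case (2 C u)
  from 2(3) obtain G' D M m0 m' e0 e' where h: "G = ctx_sum G' D" "m = m0 + m' + 1" "e = e0 + e'"
     "der G' (plug C t) (Arrow M L) m0 e0" "mder D u (M + {#TN#}) m' e'"
    by (auto elim: der_AppE)
  from 2(2)[OF h(4)] obtain G1 L1 m1 e1 where "der G1 t L1 m1 e1" "decomp C G' (Arrow M L) m0 e0 G1 L1 m1 e1"
    by blast
  then show ?case using decomp_AppL[OF _ h(5)] h by blast
next
  case (3 C u)
  from 3(3) obtain G' D m0 m' e0 e' where h: "G = ctx_sum (ctx_unbind G') D" "m = m0 + m'" "e = e0 + e'"
     "der G' (plug C t) L m0 e0" "mder D u (G' 0 + {#TN#}) m' e'"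
    by (auto elim: der_ESE)
  from 3(2)[OF h(4)] obtain G1 L1 m1 e1 where d: "der G1 t L1 m1 e1" "decomp C G' L m0 e0 G1 L1 m1 e1"
    by blast
  have "decomp (CESL C u) (ctx_sum (ctx_unbind G') D) L (m0 + m') (e0 + e') G1 L1 m1 e1"
    by (rule decomp_ESL[OF d(2) h(5)])
  then show ?case using d h by auto
qed

lemma A_lemma:
  "is_A C \<Longrightarrow> der G (plug C t) TN m e \<Longrightarrow> \<exists>G1 m1 e1. der G1 t TN m1 e1 \<and> decomp C G TN m e G1 TN m1 e1"
proof (induction C arbitrary: G m e rule: is_A.induct)
  case 1
  then show ?case using decomp_Hole by fastforce
next
  case (2 a C)
  from 2(4) obtain Ga D ma m' ea e' where h: "G = ctx_sum (ctx_unbind Ga) D" "m = ma + m'" "e = ea + e'"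
     "der Ga a TN ma ea" "mder D (plug C t) (Ga 0 + {#TN#}) m' e'"
    by (auto elim: der_ESE)
  have "Ga = empty_ctx" using answer_ctx 2(1) h(4) by blast
  then have "der D (plug C t) TN m' e'" using h(5) by (auto simp: empty_ctx_def intro: mder_single)
  from 2(3)[OF this] obtain G1 m1 e1 where "der G1 t TN m1 e1" "decomp C D TN m' e' G1 TN m1 e1"
    by blast
  then show ?case using decomp_ESR[OF 2(1) h(4)] h by blast
next
  case (3 C u)
  from 3(3) obtain G' D m0 m' e0 e' where h: "G = ctx_sum (ctx_unbind G') D" "m = m0 + m'" "e = e0 + e'"
     "der G' (plug C t) TN m0 e0" "mder D u (G' 0 + {#TN#}) m' e'"
    by (auto elim: der_ESE)
  from 3(2)[OF h(4)] obtain G1 m1 e1 where d: "der G1 t TN m1 e1" "decomp C G' TN m0 e0 G1 TN m1 e1"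
    by blast
  have "decomp (CESL C u) (ctx_sum (ctx_unbind G') D) TN (m0 + m') (e0 + e') G1 TN m1 e1"
    by (rule decomp_ESL[OF d(2) h(5)])
  then show ?case using d h by auto
qed

lemma plug_comp: "plug (comp C D) t = plug C (plug D t)"
  by (induction C) auto

lemma depth_comp: "depth (comp C D) = depth C + depth D"
  by (induction C) auto

lemma decomp_comp:
  assumes "decomp C G L m e G1 L1 m1 e1" "decomp D G1 L1 m1 e1 G2 L2 m2 e2"
  shows "decomp (comp C D) G L m e G2 L2 m2 e2"
proof -
  obtain Gr mr er where h: "G = (\<lambda>i. Gr i + G1 (i + depth C))" "m = mr + m1" "e = er + e1"
    "\<And>G1' t' m1' e1'. der G1' t' L1 m1' e1' \<Longrightarrow> (\<forall>i<depth C. G1' i = G1 i)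
           \<Longrightarrow> der (\<lambda>i. Gr i + G1' (i + depth C)) (plug C t') L (mr + m1') (er + e1')"
    using assms(1) unfolding decomp_def by blast
  obtain Gr2 mr2 er2 where h2: "G1 = (\<lambda>i. Gr2 i + G2 (i + depth D))" "m1 = mr2 + m2" "e1 = er2 + e2"
    "\<And>G1' t' m1' e1'. der G1' t' L2 m1' e1' \<Longrightarrow> (\<forall>i<depth D. G1' i = G2 i)
           \<Longrightarrow> der (\<lambda>i. Gr2 i + G1' (i + depth D)) (plug D t') L1 (mr2 + m1') (er2 + e1')"
    using assms(2) unfolding decomp_def by blast
  show ?thesis unfolding decomp_def
  proof (intro exI conjI allI impI)
    show "G = (\<lambda>i. (Gr i + Gr2 (i + depth C)) + G2 (i + depth (comp C D)))"
      using h(1) h2(1) by (auto simp: depth_comp add_ac)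
    show "m = (mr + mr2) + m2" using h h2 by simp
    show "e = (er + er2) + e2" using h h2 by simp
    fix G1' t' m1' e1' assume a: "der G1' t' L2 m1' e1'" "\<forall>i<depth (comp C D). G1' i = G2 i"
    have a2: "\<forall>i<depth D. G1' i = G2 i" using a(2) by (auto simp: depth_comp)
    have "der (\<lambda>i. Gr i + (\<lambda>i. Gr2 i + G1' (i + depth D)) (i + depth C)) (plug C (plug D t')) L
       (mr + (mr2 + m1')) (er + (er2 + e1'))"
      apply (rule h(4)[OF h2(4)[OF a(1) a2]])
      using a(2) h2(1) by (auto simp: depth_comp)
    then show "der (\<lambda>i. (Gr i + Gr2 (i + depth C)) + G1' (i + depth (comp C D))) (plug (comp C D) t') L
        ((mr + mr2) + m1') ((er + er2) + e1')"
      by (simp add: plug_comp depth_comp add_ac)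
  qed
qed

lemma Y_lemma:
  "is_Y C \<Longrightarrow> der G (plug C t) TN m e \<Longrightarrow> \<exists>G1 L1 m1 e1. der G1 t L1 m1 e1 \<and> decomp C G TN m e G1 L1 m1 e1"
proof -
  assume "is_Y C" "der G (plug C t) TN m e"
  then obtain A N where an: "is_A A" "is_N N" "C = comp A N" unfolding is_Y_def by blast
  have "der G (plug A (plug N t)) TN m e" using `der G (plug C t) TN m e` an(3) by (simp add: plug_comp)
  from A_lemma[OF an(1) this] obtain G1 m1 e1 where
    "der G1 (plug N t) TN m1 e1" "decomp A G TN m e G1 TN m1 e1" by blast
  moreover from N_lemma[OF an(2) this(1)] obtain G2 L2 m2 e2 where
    "der G2 t L2 m2 e2" "decomp N G1 TN m1 e1 G2 L2 m2 e2" by blast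
  ultimately show ?thesis using decomp_comp an(3) by blast
qed

lemma root_m_aux:
  "is_S S \<Longrightarrow> der G' (plug S (Lam s)) (Arrow M L) m0 e0 \<Longrightarrow> mder D r (M + {#TN#}) m' e'
   \<Longrightarrow> der (ctx_sum G' D) (plug S (ES s (lift (depth S) 0 r))) L (m0 + m') (e0 + e')"
proof (induction S arbitrary: G' m0 e0 D r rule: is_S.induct)
  case 1
  from 1(1) obtain Gs where h: "G' = ctx_unbind Gs" "M = Gs 0" "der Gs s L m0 e0"
    by (auto elim: der_LamE)
  show ?case using der_mder.es[OF h(3)] 1(2) h by simp
next
  case (2 S w)
  from 2(3) obtain Gs Dw ma mw ea ew where h: "G' = ctx_sum (ctx_unbind Gs) Dw" "m0 = ma + mw" "e0 = ea + ew"
     "der Gs (plug S (Lam s)) (Arrow M L) ma ea" "mder Dw w (Gs 0 + {#TN#}) mw ew"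
    by (auto elim: der_ESE)
  have "mder (shc 1 0 D) (lift 1 0 r) (M + {#TN#}) m' e'" using lift_der(2)[OF 2(4)] .
  from 2(2)[OF h(4) this]
  have ih: "der (ctx_sum Gs (shc 1 0 D)) (plug S (ES s (lift (Suc (depth S)) 0 r))) L (ma + m') (ea + e')"
    by (simp add: lift_lift)
  have z: "ctx_sum Gs (shc 1 0 D) 0 = Gs 0" by (simp add: ctx_sum_def shc_def)
  have "der (ctx_sum (ctx_unbind (ctx_sum Gs (shc 1 0 D))) Dw) (ES (plug S (ES s (lift (Suc (depth S)) 0 r))) w) L
     (ma + m' + mw) (ea + e' + ew)"
    by (rule der_mder.es[OF ih], subst z, rule h(5))
  moreover have "ctx_sum (ctx_unbind (ctx_sum Gs (shc 1 0 D))) Dw = ctx_sum G' D"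
    using h(1) by (auto simp: ctx_sum_def ctx_unbind_def shc_def add_ac)
  ultimately show ?case using h by (simp add: add_ac)
qed

lemma root_m_sr:
  assumes "root_m l r" "der G l L m e"
  shows "m \<ge> 1 \<and> der G r L (m - 1) e"
proof -
  from assms(1) obtain S s w where h: "is_S S" "l = App (plug S (Lam s)) w"
    "r = plug S (ES s (lift (depth S) 0 w))" unfolding root_m_def by blast
  from assms(2) h(2) obtain G' D M m0 m' e0 e' where k: "G = ctx_sum G' D" "m = m0 + m' + 1" "e = e0 + e'"
     "der G' (plug S (Lam s)) (Arrow M L) m0 e0" "mder D w (M + {#TN#}) m' e'"
    by (auto elim: der_AppE)
  show ?thesis using root_m_aux[OF h(1) k(4) k(5)] h k by simp
qed

lemma root_e_sr:
  assumes "der G (ES (plug K (Var (depth K))) s) L m e"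
    and hole: "\<And>Gb mb eb. der Gb (plug K (Var (depth K))) L mb eb \<Longrightarrow>
        \<exists>G1 L1 m1 e1. der G1 (Var (depth K)) L1 m1 e1 \<and> decomp K Gb L mb eb G1 L1 m1 e1"
  shows "e \<ge> 1 \<and> der G (ES (plug K (lift (Suc (depth K)) 0 s)) s) L m (e - 1)"
proof -
  let ?d = "depth K"
  from assms(1) obtain Gb D mb m' eb e' where h: "G = ctx_sum (ctx_unbind Gb) D" "m = mb + m'" "e = eb + e'"
     "der Gb (plug K (Var ?d)) L mb eb" "mder D s (Gb 0 + {#TN#}) m' e'"
    by (auto elim: der_ESE)
  from hole[OF h(4)] obtain G1 L1 m1 e1 where d: "der G1 (Var ?d) L1 m1 e1" "decomp K Gb L mb eb G1 L1 m1 e1"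
    by blast
  from d(1) have g1: "G1 = empty_ctx(?d := {#L1#})" "m1 = 0" "e1 = 1" by (auto elim: der_VarE)
  obtain Gr mr er where k: "Gb = (\<lambda>i. Gr i + G1 (i + ?d))" "mb = mr + m1" "eb = er + e1"
    "\<And>G1' t' m1' e1'. der G1' t' L1 m1' e1' \<Longrightarrow> (\<forall>i<?d. G1' i = G1 i)
           \<Longrightarrow> der (\<lambda>i. Gr i + G1' (i + ?d)) (plug K t') L (mr + m1') (er + e1')"
    using d(2) unfolding decomp_def by blast
  have gb0: "Gb 0 = Gr 0 + {#L1#}" using k(1) g1(1) by simp
  then have "L1 \<in># Gb 0 + {#TN#}" by simp
  from mder_split[OF h(5) this] obtain D1 D2 ma mc ea ec where sp: "D = ctx_sum D1 D2" "m' = ma + mc"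
    "e' = ea + ec" "der D1 s L1 ma ea" "mder D2 s (Gb 0 + {#TN#} - {#L1#}) mc ec" by blast
  have sp5: "mder D2 s (Gr 0 + {#TN#}) mc ec" using sp(5) gb0 by (simp add: add_ac)
  have ls: "der (shc (Suc ?d) 0 D1) (lift (Suc ?d) 0 s) L1 ma ea" using lift_der(1)[OF sp(4)] .
  have agree: "\<forall>i<?d. shc (Suc ?d) 0 D1 i = G1 i" using g1(1) by (auto simp: shc_def empty_ctx_def)
  let ?Gb' = "\<lambda>i. Gr i + shc (Suc ?d) 0 D1 (i + ?d)"
  have nb: "der ?Gb' (plug K (lift (Suc ?d) 0 s)) L (mr + ma) (er + ea)"
    using k(4)[OF ls agree] .
  have "?Gb' 0 = Gr 0" by (simp add: shc_def)
  then have "mder D2 s (?Gb' 0 + {#TN#}) mc ec" using sp5 by simp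
  from der_mder.es[OF nb this]
  have "der (ctx_sum (ctx_unbind ?Gb') D2) (ES (plug K (lift (Suc ?d) 0 s)) s) L (mr + ma + mc) (er + ea + ec)" .
  moreover have "ctx_sum (ctx_unbind ?Gb') D2 = G"
    using h(1) k(1) g1(1) sp(1) by (auto simp: ctx_sum_def ctx_unbind_def shc_def empty_ctx_def add_ac)
  ultimately show ?thesis using h k g1 sp by (simp add: add_ac)
qed

theorem proposition12p4:
  assumes "der \<Gamma> t TN m e"
  shows "(ym t u \<longrightarrow> m \<ge> 1 \<and> der \<Gamma> u TN (m - 1) e)
       \<and> (yeAY t u \<or> yeYN t u \<longrightarrow> e \<ge> 1 \<and> der \<Gamma> u TN m (e - 1))"
proof (rule conjI; rule impI)
  assume "ym t u"
  then obtain Y l r where h: "is_Y Y" "root_m l r" "t = plug Y l" "u = plug Y r" unfolding ym_def by blast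
  from Y_lemma[OF h(1)] assms h(3) obtain G1 L1 m1 e1 where d: "der G1 l L1 m1 e1" "decomp Y \<Gamma> TN m e G1 L1 m1 e1"
    by blast
  obtain Gr mr er where k: "\<Gamma> = (\<lambda>i. Gr i + G1 (i + depth Y))" "m = mr + m1" "e = er + e1"
    "\<And>G1' t' m1' e1'. der G1' t' L1 m1' e1' \<Longrightarrow> (\<forall>i<depth Y. G1' i = G1 i)
           \<Longrightarrow> der (\<lambda>i. Gr i + G1' (i + depth Y)) (plug Y t') TN (mr + m1') (er + e1')"
    using d(2) unfolding decomp_def by blast
  from root_m_sr[OF h(2) d(1)] have r: "1 \<le> m1" "der G1 r L1 (m1 - 1) e1" by auto
  from k(4)[OF r(2)] have "der \<Gamma> u TN (mr + (m1 - 1)) (er + e1)" using k(1) h(4) by simp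
  then show "m \<ge> 1 \<and> der \<Gamma> u TN (m - 1) e" using r(1) k(2,3) by simp
next
  assume "yeAY t u \<or> yeYN t u"
  then show "e \<ge> 1 \<and> der \<Gamma> u TN m (e - 1)"
  proof
    assume "yeAY t u"
    then obtain A l r where h: "is_A A" "root_e is_Y l r" "t = plug A l" "u = plug A r" unfolding yeAY_def by blast
    from A_lemma[OF h(1)] assms h(3) obtain G1 m1 e1 where d: "der G1 l TN m1 e1" "decomp A \<Gamma> TN m e G1 TN m1 e1"
      by blast
    obtain Gr mr er where k: "\<Gamma> = (\<lambda>i. Gr i + G1 (i + depth A))" "m = mr + m1" "e = er + e1"
      "\<And>G1' t' m1' e1'. der G1' t' TN m1' e1' \<Longrightarrow> (\<forall>i<depth A. G1' i = G1 i)
           \<Longrightarrow> der (\<lambda>i. Gr i + G1' (i + depth A)) (plug A t') TN (mr + m1') (er + e1')"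
      using d(2) unfolding decomp_def by blast
    from h(2) obtain K s where ks: "is_Y K" "l = ES (plug K (Var (depth K))) s"
      "r = ES (plug K (lift (Suc (depth K)) 0 s)) s" unfolding root_e_def by blast
    from root_e_sr[of G1 K s TN m1 e1] d(1) ks Y_lemma[OF ks(1)]
    have r: "1 \<le> e1" "der G1 r TN m1 (e1 - 1)" by auto
    from k(4)[OF r(2)] have "der \<Gamma> u TN (mr + m1) (er + (e1 - 1))" using k(1) h(4) by simp
    then show "e \<ge> 1 \<and> der \<Gamma> u TN m (e - 1)" using r(1) k(2,3) by simp
  next
    assume "yeYN t u"
    then obtain Y l r where h: "is_Y Y" "root_e is_N l r" "t = plug Y l" "u = plug Y r" unfolding yeYN_def by blast
    from Y_lemma[OF h(1)] assms h(3) obtain G1 L1 m1 e1 where d: "der G1 l L1 m1 e1" "decomp Y \<Gamma> TN m e G1 L1 m1 e1"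
      by blast
    obtain Gr mr er where k: "\<Gamma> = (\<lambda>i. Gr i + G1 (i + depth Y))" "m = mr + m1" "e = er + e1"
      "\<And>G1' t' m1' e1'. der G1' t' L1 m1' e1' \<Longrightarrow> (\<forall>i<depth Y. G1' i = G1 i)
           \<Longrightarrow> der (\<lambda>i. Gr i + G1' (i + depth Y)) (plug Y t') TN (mr + m1') (er + e1')"
      using d(2) unfolding decomp_def by blast
    from h(2) obtain K s where ks: "is_N K" "l = ES (plug K (Var (depth K))) s"
      "r = ES (plug K (lift (Suc (depth K)) 0 s)) s" unfolding root_e_def by blast
    from root_e_sr[of G1 K s L1 m1 e1] d(1) ks N_lemma[OF ks(1)]
    have r: "1 \<le> e1" "der G1 r L1 m1 (e1 - 1)" by auto
    from k(4)[OF r(2)] have "der \<Gamma> u TN (mr + m1) (er + (e1 - 1))" using k(1) h(4) by simp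
    then show "e \<ge> 1 \<and> der \<Gamma> u TN m (e - 1)" using r(1) k(2,3) by simp
  qed
qed

end
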